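(* Let $f=f_{I+1}\circ\cdots\circ f_1:\mathbb R^{d_1}\to\mathbb R^{d_3}$ be an infinite-width neural network of depth $I\ge1$, viewed as a map $f:\mathbb R^{d_1}\times\mathcal U\to\mathbb R^{d_3}$ of the input $x$ and the parameter $\mu=(\mu_0,\dots,\mu_I)\in\mathcal U$. Then $f$ is continuous (jointly in $x\in\mathbb R^{d_1}$ and $\mu\in\mathcal U$, with the product metric on $\mathbb R^{d_1}\times\mathcal U$).
   Context: Let $\mathcal X_0=\mathbb R^{d_1}$, $\mathcal X_i=\ell^2(\mathbb N)$ for $1\le i\le I$ (sequences indexed by $\{0,1,\dots\}$), $\mathcal X_{I+1}=\mathbb R^{d_3}$; $\Theta_0=\{0,\dots,d_1\}$, $\Theta_i=\mathbb N\cup\{0\}$ for $1\le i\le I$. The layer-$i$ parameter ($i=0,\dots,I$) is a vector measure $\mu_i=\sum_{m\in\Theta_i}w^{i+1}_m\delta_m$ with $w^{i+1}_m\in\mathcal X_{i+1}$ and finite total variation norm $\|\mu_i\|_{TV}=\sum_m\|w^{i+1}_m\|_{\mathcal X_{i+1}}$; these form Banach spaces $\mathcal M(\Theta_i,\mathcal X_{i+1})$, and $\mathcal U=\prod_{i=0}^I\mathcal M(\Theta_i,\mathcal X_{i+1})$ carries the product metric. With $\rho_0(x,0)=1$, $\rho_0(x,n)=x_n$ ($n=1,\dots,d_1$) and, for $i\ge1$, $\rho_i(y,0)=1$, $\rho_i(y,n)=\sigma(y_{n-1})$ ($n\ge1$), the layers are $f_i(y)=\int_{\Theta_{i-1}}\rho_{i-1}(y,\theta)\,d\mu_{i-1}(\theta)=\sum_m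 w^{i}_m\rho_{i-1}(y,m)$, i.e. $f_1(x)=W^1x+b^1$ and $f_{i+1}(y)=W^{i+1}\sigma(y)+b^{i+1}$ with $b^{i+1}=w^{i+1}_0$, $W^{i+1}y=\sum_{m\ge1}w^{i+1}_my_{m-1}$. Here $\sigma$ is the ReLU function applied componentwise. *)

theory Defs
  imports "HOL-Analysis.Analysis"
begin

text \<open>Conventions:
  input space R^d1 = real^'a, output space R^d3 = real^'b;
  the hidden spaces l^2(N) are represented by square-summable sequences nat => real;
  the index set Theta_0 = {0,...,d1} is represented by 'a option
  (None = the bias index 0, Some j = the coordinate index j);
  Theta_i = N for i >= 1.\<close>

definition relu :: "real \<Rightarrow> real" where
  "relu t = max 0 t"

definition l2 :: "(nat \<Rightarrow> real) set" where
  "l2 = {y. summable (\<lambda>n. (y n)^2)}"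

definition l2norm :: "(nat \<Rightarrow> real) \<Rightarrow> real" where
  "l2norm y = sqrt (\<Sum>n. (y n)^2)"

fun rho :: "(nat \<Rightarrow> real) \<Rightarrow> nat \<Rightarrow> real" where
  "rho y 0 = 1"
| "rho y (Suc n) = relu (y n)"

fun rho0 :: "real^'a \<Rightarrow> 'a option \<Rightarrow> real" where
  "rho0 x None = 1"
| "rho0 x (Some j) = x $ j"

text \<open>Parameter measures, given by their weights w_m.\<close>
type_synonym 'a meas0 = "'a option \<Rightarrow> nat \<Rightarrow> real"
type_synonym meas_mid = "nat \<Rightarrow> nat \<Rightarrow> real"
type_synonym 'b meas_out = "nat \<Rightarrow> real^'b"

definition valid0 :: "'a::finite meas0 \<Rightarrow> bool" where
  "valid0 w \<longleftrightarrow> (\<forall>m. w m \<in> l2)"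

definition valid_mid :: "meas_mid \<Rightarrow> bool" where
  "valid_mid w \<longleftrightarrow> (\<forall>m. w m \<in> l2) \<and> summable (\<lambda>m. l2norm (w m))"

definition valid_out :: "'b::finite meas_out \<Rightarrow> bool" where
  "valid_out w \<longleftrightarrow> summable (\<lambda>m. norm (w m))"

definition tv0 :: "'a::finite meas0 \<Rightarrow> real" where
  "tv0 w = (\<Sum>m\<in>UNIV. l2norm (w m))"

definition tv_mid :: "meas_mid \<Rightarrow> real" where
  "tv_mid w = (\<Sum>m. l2norm (w m))"

definition tv_out :: "'b::finite meas_out \<Rightarrow> real" where
  "tv_out w = (\<Sum>m. norm (w m))"

definition layer0 :: "'a::finite meas0 \<Rightarrow> real^'a \<Rightarrow> nat \<Rightarrow> real" where
  "layer0 w x = (\<lambda>k. \<Sum>m\<in>UNIV. rho0 x m * w m k)"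

definition layer_mid :: "meas_mid \<Rightarrow> (nat \<Rightarrow> real) \<Rightarrow> nat \<Rightarrow> real" where
  "layer_mid w y = (\<lambda>k. \<Sum>m. rho y m * w m k)"

definition layer_out :: "'b::finite meas_out \<Rightarrow> (nat \<Rightarrow> real) \<Rightarrow> real^'b" where
  "layer_out w y = (\<Sum>m. rho y m *\<^sub>R w m)"

type_synonym ('a,'b) param = "'a meas0 \<times> meas_mid list \<times> 'b meas_out"

definition params :: "nat \<Rightarrow> ('a::finite,'b::finite) param set" where
  "params I = {(w0, ws, wI). valid0 w0 \<and> length ws = I - 1 \<and>
                 (\<forall>w\<in>set ws. valid_mid w) \<and> valid_out wI}"

definition network :: "('a::finite,'b::finite) param \<Rightarrow> real^'a \<Rightarrow> real^'b" where
  "network p x = (case p of (w0, ws, wI) \<Rightarrow>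
      layer_out wI (fold layer_mid ws (layer0 w0 x)))"

definition param_dist :: "('a::finite,'b::finite) param \<Rightarrow> ('a,'b) param \<Rightarrow> real" where
  "param_dist p q = (case p of (w0, ws, wI) \<Rightarrow> case q of (v0, vs, vI) \<Rightarrow>
      tv0 (\<lambda>m k. w0 m k - v0 m k)
    + (\<Sum>i<length ws. tv_mid (\<lambda>m k. (ws ! i) m k - (vs ! i) m k))
    + tv_out (\<lambda>m. wI m - vI m))"

end

theory Submission
  imports Defs
begin

lemma suminf_abs_bound:
  fixes f :: "nat \<Rightarrow> real"
  assumes "\<And>n. \<bar>f n\<bar> \<le> g n" "summable g"
  shows "summable f" "\<bar>suminf f\<bar> \<le> suminf g"
proof -
  have s: "summable (\<lambda>n. \<bar>f n\<bar>)"
    by (rule summable_rabs_comparison_test[OF _ assms(2)]) (use assms(1) in auto)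
  then show "summable f" using summable_rabs_cancel by blast
  have "\<bar>suminf f\<bar> \<le> (\<Sum>n. \<bar>f n\<bar>)" using summable_norm[of f] s by simp
  also have "\<dots> \<le> suminf g" by (rule suminf_le[OF assms(1) s assms(2)])
  finally show "\<bar>suminf f\<bar> \<le> suminf g" .
qed

lemma l2norm_nonneg: "u \<in> l2 \<Longrightarrow> l2norm u \<ge> 0"
  unfolding l2norm_def l2_def by (simp add: suminf_nonneg)

lemma l2_coord:
  assumes "u \<in> l2" shows "\<bar>u k\<bar> \<le> l2norm u"
proof -
  have s: "summable (\<lambda>n. (u n)^2)" using assms by (simp add: l2_def)
  have "(u k)^2 \<le> (\<Sum>n. (u n)^2)"
    using sum_le_suminf[OF s, of "{k}"] by simp
  then have "sqrt ((u k)^2) \<le> l2norm u" unfolding l2norm_def by (rule real_sqrt_le_mono)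
  then show ?thesis by simp
qed

lemma l2_diff:
  assumes "u \<in> l2" "v \<in> l2"
  shows "(\<lambda>k. u k - v k) \<in> l2" "l2norm (\<lambda>k. u k - v k) \<le> 2 * (l2norm u + l2norm v)"
proof -
  have su: "summable (\<lambda>n. (u n)^2)" and sv: "summable (\<lambda>n. (v n)^2)" using assms by (auto simp: l2_def)
  have b: "\<And>n. (u n - v n)^2 \<le> 2 * (u n)^2 + 2 * (v n)^2"
  proof -
    fix n have "0 \<le> (u n + v n)^2" by simp
    then show "(u n - v n)^2 \<le> 2 * (u n)^2 + 2 * (v n)^2" by (simp add: power2_eq_square algebra_simps)
  qed
  have s2: "summable (\<lambda>n. 2 * (u n)^2 + 2 * (v n)^2)"
    using summable_add[OF summable_mult[OF su] summable_mult[OF sv]] by simp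
  have sd: "summable (\<lambda>n. (u n - v n)^2)"
    by (rule summable_comparison_test'[OF s2]) (use b in auto)
  then show "(\<lambda>k. u k - v k) \<in> l2" by (simp add: l2_def)
  have "(\<Sum>n. (u n - v n)^2) \<le> (\<Sum>n. 2 * (u n)^2 + 2 * (v n)^2)"
    by (rule suminf_le[OF b sd s2])
  also have "\<dots> = 2 * (\<Sum>n. (u n)^2) + 2 * (\<Sum>n. (v n)^2)"
    using suminf_add[OF summable_mult[OF su] summable_mult[OF sv]] suminf_mult[OF su] suminf_mult[OF sv]
    by simp
  finally have le: "(\<Sum>n. (u n - v n)^2) \<le> 2 * (\<Sum>n. (u n)^2) + 2 * (\<Sum>n. (v n)^2)" .
  define A where "A = (\<Sum>n. (u n)^2)"
  define B where "B = (\<Sum>n. (v n)^2)"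
  have A0: "A \<ge> 0" "B \<ge> 0" unfolding A_def B_def
    by (auto intro!: suminf_nonneg su sv)
  have "l2norm (\<lambda>k. u k - v k) \<le> sqrt (2*A + 2*B)"
    unfolding l2norm_def A_def B_def using le by (simp add: real_sqrt_le_mono)
  also have "\<dots> \<le> 2 * (sqrt A + sqrt B)"
  proof (rule real_le_lsqrt)
    show "0 \<le> 2 * (sqrt A + sqrt B)" using A0 by simp
    have e: "(sqrt A)^2 = A" "(sqrt B)^2 = B" using A0 by simp_all
    have "(2 * (sqrt A + sqrt B))^2 = 4*(sqrt A)^2 + 4*(sqrt B)^2 + 8 * sqrt A * sqrt B"
      unfolding power2_eq_square by algebra
    then have "(2 * (sqrt A + sqrt B))^2 = 4*A + 4*B + 8 * sqrt A * sqrt B" by (simp only: e)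
    moreover have "sqrt A * sqrt B \<ge> 0" using A0 by simp
    ultimately show "2*A+2*B \<le> (2 * (sqrt A + sqrt B))^2" using A0 by simp
  qed
  finally show "l2norm (\<lambda>k. u k - v k) \<le> 2 * (l2norm u + l2norm v)"
    unfolding l2norm_def A_def B_def .
qed

lemma tv_mid_diff:
  assumes "valid_mid v" "valid_mid w"
  shows "summable (\<lambda>m. l2norm (\<lambda>k. v m k - w m k))"
    "tv_mid (\<lambda>m k. v m k - w m k) \<ge> 0"
    "\<And>m k. \<bar>v m k - w m k\<bar> \<le> l2norm (\<lambda>k. v m k - w m k)"
    "\<And>m. l2norm (\<lambda>k. v m k - w m k) \<le> tv_mid (\<lambda>m k. v m k - w m k)"
proof -
  have v: "\<And>m. v m \<in> l2" "summable (\<lambda>m. l2norm (v m))" and w: "\<And>m. w m \<in> l2" "summable (\<lambda>m. l2norm (w m))"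
    using assms by (auto simp: valid_mid_def)
  have s2: "summable (\<lambda>m. 2 * (l2norm (v m) + l2norm (w m)))"
    by (intro summable_mult summable_add v w)
  show s: "summable (\<lambda>m. l2norm (\<lambda>k. v m k - w m k))"
    by (rule summable_comparison_test'[OF s2])
       (use l2_diff[OF v(1) w(1)] l2norm_nonneg[OF l2_diff(1)[OF v(1) w(1)]] in auto)
  have nn: "\<And>m. l2norm (\<lambda>k. v m k - w m k) \<ge> 0" using l2norm_nonneg[OF l2_diff(1)[OF v(1) w(1)]] .
  show "tv_mid (\<lambda>m k. v m k - w m k) \<ge> 0" unfolding tv_mid_def by (rule suminf_nonneg[OF s nn])
  show "\<And>m k. \<bar>v m k - w m k\<bar> \<le> l2norm (\<lambda>k. v m k - w m k)"
    using l2_coord[OF l2_diff(1)[OF v(1) w(1)]] by simp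
  show "\<And>m. l2norm (\<lambda>k. v m k - w m k) \<le> tv_mid (\<lambda>m k. v m k - w m k)"
    unfolding tv_mid_def using sum_le_suminf[OF s, of "{m}" for m] nn by simp
qed

lemma tv_out_diff:
  assumes "valid_out v" "valid_out w"
  shows "summable (\<lambda>m. norm (v m - w m))" "tv_out (\<lambda>m. v m - w m) \<ge> 0"
proof -
  have s2: "summable (\<lambda>m. norm (v m) + norm (w m))"
    using assms by (intro summable_add) (auto simp: valid_out_def)
  show s: "summable (\<lambda>m. norm (v m - w m))"
    by (rule summable_comparison_test'[OF s2]) (simp add: norm_triangle_ineq4)
  show "tv_out (\<lambda>m. v m - w m) \<ge> 0" unfolding tv_out_def by (rule suminf_nonneg[OF s]) simp
qed

lemma tv0_diff:
  assumes "valid0 v" "valid0 w"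
  shows "tv0 (\<lambda>m k. v m k - w m k) \<ge> 0"
    "\<And>m k. \<bar>v m k - w m k\<bar> \<le> tv0 (\<lambda>m k. v m k - w m k)"
proof -
  have v: "\<And>m. v m \<in> l2" and w: "\<And>m. w m \<in> l2" using assms by (auto simp: valid0_def)
  have nn: "\<And>m. l2norm (\<lambda>k. v m k - w m k) \<ge> 0" using l2norm_nonneg[OF l2_diff(1)[OF v w]] .
  show "tv0 (\<lambda>m k. v m k - w m k) \<ge> 0" unfolding tv0_def by (rule sum_nonneg) (use nn in auto)
  fix m k
  have "\<bar>v m k - w m k\<bar> \<le> l2norm (\<lambda>k. v m k - w m k)" using l2_coord[OF l2_diff(1)[OF v w]] by simp
  also have "\<dots> \<le> tv0 (\<lambda>m k. v m k - w m k)" unfolding tv0_def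
    by (rule member_le_sum) (use nn in auto)
  finally show "\<bar>v m k - w m k\<bar> \<le> tv0 (\<lambda>m k. v m k - w m k)" .
qed

lemma prod_bound:
  fixes a d e b :: real
  assumes "\<bar>a\<bar> \<le> A" "\<bar>d\<bar> \<le> D" "\<bar>e\<bar> \<le> E" "\<bar>b\<bar> \<le> L"
  shows "\<bar>a*d + e*b\<bar> \<le> A*D + E*L"
proof -
  have "\<bar>a*d + e*b\<bar> \<le> \<bar>a\<bar>*\<bar>d\<bar> + \<bar>e\<bar>*\<bar>b\<bar>" using abs_triangle_ineq[of "a*d" "e*b"] by (simp add: abs_mult)
  also have "\<dots> \<le> A*D + E*L"
    by (intro add_mono mult_mono) (use assms in auto)
  finally show ?thesis .
qed

lemma choose_delta:
  fixes C \<epsilon> :: real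
  assumes "C \<ge> 0" "\<epsilon> > 0"
  shows "min 1 (\<epsilon> / (C+1)) > 0" "\<And>d. 0 \<le> d \<Longrightarrow> d \<le> min 1 (\<epsilon> / (C+1)) \<Longrightarrow> d * C \<le> \<epsilon>"
proof -
  show "min 1 (\<epsilon> / (C+1)) > 0" using assms by simp
  fix d :: real assume d: "0 \<le> d" "d \<le> min 1 (\<epsilon> / (C+1))"
  have "d * C \<le> (\<epsilon> / (C+1)) * C" using d assms by (intro mult_right_mono) auto
  also have "\<dots> \<le> \<epsilon>" using assms by (simp add: field_simps)
  finally show "d * C \<le> \<epsilon>" .
qed

lemma relu_abs: "\<bar>relu a\<bar> \<le> \<bar>a\<bar>" and relu_lip: "\<bar>relu a - relu b\<bar> \<le> \<bar>a - b\<bar>"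
  unfolding relu_def by auto

lemma rho_bound: assumes "\<And>k. \<bar>y k\<bar> \<le> B" shows "\<bar>rho y m\<bar> \<le> 1 + B"
proof -
  have "0 \<le> B" using assms[of 0] by linarith
  then show ?thesis using assms relu_abs by (cases m) (auto intro: order_trans[OF relu_abs] simp del: abs_le_iff, smt (verit) relu_abs)
qed

lemma rho_lip: "(\<And>k. \<bar>y' k - y k\<bar> \<le> d) \<Longrightarrow> 0 \<le> d \<Longrightarrow> \<bar>rho y' m - rho y m\<bar> \<le> d"
  by (cases m) (auto intro: order_trans[OF relu_lip])

lemma rho0_bound: "\<bar>rho0 x m\<bar> \<le> 1 + norm x"
  by (cases m) (auto intro: order_trans[OF component_le_norm_cart])

lemma rho0_lip: "\<bar>rho0 x' m - rho0 x m\<bar> \<le> dist x' x"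
  by (cases m) (auto simp: dist_norm intro: order_trans[OF _ component_le_norm_cart])

lemma layer0_bound:
  assumes "valid0 w" shows "\<bar>layer0 w x k\<bar> \<le> (1 + norm x) * tv0 w"
proof -
  have w: "\<And>m. w m \<in> l2" using assms by (auto simp: valid0_def)
  have "\<bar>layer0 w x k\<bar> \<le> (\<Sum>m\<in>UNIV. \<bar>rho0 x m * w m k\<bar>)" unfolding layer0_def by (rule sum_abs)
  also have "\<dots> \<le> (\<Sum>m\<in>UNIV. (1 + norm x) * l2norm (w m))"
    by (rule sum_mono) (simp add: abs_mult mult_mono rho0_bound l2_coord[OF w])
  finally show ?thesis by (simp add: tv0_def sum_distrib_left)
qed

lemma layer0_cont:
  assumes "valid0 w" "\<epsilon> > 0"
  shows "\<exists>\<delta>>0. \<forall>x' v. valid0 v \<longrightarrow> dist x' x \<le> \<delta> \<longrightarrow> tv0 (\<lambda>m k. v m k - w m k) \<le> \<delta> \<longrightarrow>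
           (\<forall>k. \<bar>layer0 v x' k - layer0 w x k\<bar> \<le> \<epsilon>)"
proof -
  have w: "\<And>m. w m \<in> l2" using assms by (auto simp: valid0_def)
  define C where "C = real CARD('a option) * (2 + norm x) + tv0 w"
  have C0: "C \<ge> 0" unfolding C_def tv0_def by (intro add_nonneg_nonneg sum_nonneg mult_nonneg_nonneg l2norm_nonneg w) auto
  define \<delta> where "\<delta> = min 1 (\<epsilon> / (C+1))"
  note cd = choose_delta[OF C0 assms(2), folded \<delta>_def]
  have d1: "\<delta> \<le> 1" unfolding \<delta>_def by simp
  show ?thesis
  proof (intro exI[of _ \<delta>] conjI allI impI)
    show "\<delta> > 0" using cd by simp
    fix x' :: "real^'a" and v k assume v: "valid0 v" and dx: "dist x' x \<le> \<delta>" and dv: "tv0 (\<lambda>m k. v m k - w m k) \<le> \<delta>"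
    have "layer0 v x' k - layer0 w x k = (\<Sum>m\<in>UNIV. rho0 x' m * (v m k - w m k) + (rho0 x' m - rho0 x m) * w m k)"
      unfolding layer0_def by (simp add: sum_subtractf[symmetric] algebra_simps)
    also have "\<bar>\<dots>\<bar> \<le> (\<Sum>m\<in>UNIV. \<bar>rho0 x' m * (v m k - w m k) + (rho0 x' m - rho0 x m) * w m k\<bar>)"
      by (rule sum_abs)
    also have "\<dots> \<le> (\<Sum>m\<in>UNIV. (2 + norm x) * \<delta> + \<delta> * l2norm (w m))"
    proof (rule sum_mono)
      fix m :: "'a option"
      have "norm x' \<le> norm x + dist x' x" by (metis dist_commute dist_norm norm_triangle_sub add.commute)
      then have "\<bar>rho0 x' m\<bar> \<le> 2 + norm x" using rho0_bound[of x' m] dx d1 by linarith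
      then show "\<bar>rho0 x' m * (v m k - w m k) + (rho0 x' m - rho0 x m) * w m k\<bar> \<le> (2 + norm x) * \<delta> + \<delta> * l2norm (w m)"
        using prod_bound tv0_diff(2)[OF v assms(1)] dv rho0_lip[of x' m x] dx l2_coord[OF w]
        by (meson order_trans)
    qed
    also have "\<dots> = \<delta> * C" unfolding C_def tv0_def by (simp add: sum.distrib sum_distrib_left algebra_simps)
    also have "\<dots> \<le> \<epsilon>" using cd(2)[of \<delta>] cd(1) by simp
    finally show "\<bar>layer0 v x' k - layer0 w x k\<bar> \<le> \<epsilon>" .
  qed
qed

lemma layer_mid_bound:
  assumes "valid_mid w" "\<And>k. \<bar>y k\<bar> \<le> B"
  shows "summable (\<lambda>m. rho y m * w m k)" "\<bar>layer_mid w y k\<bar> \<le> (1 + B) * tv_mid w"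
proof -
  have w: "\<And>m. w m \<in> l2" "summable (\<lambda>m. l2norm (w m))" using assms by (auto simp: valid_mid_def)
  have b: "\<And>m. \<bar>rho y m * w m k\<bar> \<le> (1 + B) * l2norm (w m)"
  proof -
    fix m
    have B0: "0 \<le> B" using assms(2)[of 0] by linarith
    show "\<bar>rho y m * w m k\<bar> \<le> (1 + B) * l2norm (w m)"
      unfolding abs_mult by (rule mult_mono[OF rho_bound[OF assms(2)] l2_coord[OF w(1)]]) (use B0 in auto)
  qed
  note r = suminf_abs_bound[OF b summable_mult[OF w(2)]]
  show "summable (\<lambda>m. rho y m * w m k)" by (rule r(1))
  show "\<bar>layer_mid w y k\<bar> \<le> (1 + B) * tv_mid w"
    using r(2) unfolding layer_mid_def tv_mid_def suminf_mult[OF w(2)] .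
qed

lemma layer_mid_cont:
  assumes "valid_mid w" "\<And>k. \<bar>y k\<bar> \<le> B" "\<epsilon> > 0"
  shows "\<exists>\<delta>>0. \<forall>y' v. valid_mid v \<longrightarrow> (\<forall>k. \<bar>y' k - y k\<bar> \<le> \<delta>) \<longrightarrow> tv_mid (\<lambda>m k. v m k - w m k) \<le> \<delta> \<longrightarrow>
           (\<forall>k. \<bar>layer_mid v y' k - layer_mid w y k\<bar> \<le> \<epsilon>)"
proof -
  have w: "\<And>m. w m \<in> l2" "summable (\<lambda>m. l2norm (w m))" using assms by (auto simp: valid_mid_def)
  have B0: "0 \<le> B" using assms(2)[of 0] by linarith
  define C where "C = (2 + B) + tv_mid w"
  have C0: "C \<ge> 0" unfolding C_def tv_mid_def using B0
    by (intro add_nonneg_nonneg suminf_nonneg w l2norm_nonneg) auto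
  define \<delta> where "\<delta> = min 1 (\<epsilon> / (C+1))"
  note cd = choose_delta[OF C0 assms(3), folded \<delta>_def]
  have d1: "\<delta> \<le> 1" unfolding \<delta>_def by simp
  show ?thesis
  proof (intro exI[of _ \<delta>] conjI allI impI)
    show "\<delta> > 0" using cd by simp
    fix y' v k assume v: "valid_mid v" and dy: "\<forall>k. \<bar>y' k - y k\<bar> \<le> \<delta>" and dv: "tv_mid (\<lambda>m k. v m k - w m k) \<le> \<delta>"
    have vv: "\<And>m. v m \<in> l2" "summable (\<lambda>m. l2norm (v m))" using v by (auto simp: valid_mid_def)
    have By': "\<And>k. \<bar>y' k\<bar> \<le> B + 1" 
    proof -
      fix k show "\<bar>y' k\<bar> \<le> B + 1" using dy[rule_format, of k] d1 assms(2)[of k] by arith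
    qed
    have s1: "summable (\<lambda>m. rho y' m * v m k)" using layer_mid_bound(1)[where y=y' and B="B+1", OF v By'] by blast
    have s2: "summable (\<lambda>m. rho y m * w m k)" using layer_mid_bound(1)[where y=y and B=B, OF assms(1,2)] by blast
    note td = tv_mid_diff[OF v assms(1)]
    define g where "g m = (2 + B) * l2norm (\<lambda>k. v m k - w m k) + \<delta> * l2norm (w m)" for m
    have gs: "summable g" unfolding g_def by (intro summable_add summable_mult td(1) w(2))
    have gb: "\<And>m. \<bar>rho y' m * v m k - rho y m * w m k\<bar> \<le> g m"
    proof -
      fix m
      have eq: "rho y' m * v m k - rho y m * w m k = rho y' m * (v m k - w m k) + (rho y' m - rho y m) * w m k"
        by (simp add: algebra_simps)
      have rb: "\<bar>rho y' m\<bar> \<le> 2 + B" using rho_bound[of y' "B+1" m, OF By'] by simp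
      have rl: "\<bar>rho y' m - rho y m\<bar> \<le> \<delta>" using rho_lip[of y' y \<delta> m] dy cd(1) by auto
      show "\<bar>rho y' m * v m k - rho y m * w m k\<bar> \<le> g m"
        unfolding g_def eq by (rule prod_bound[OF rb td(3) rl l2_coord[OF w(1)]])
    qed
    have "layer_mid v y' k - layer_mid w y k = (\<Sum>m. rho y' m * v m k - rho y m * w m k)"
      unfolding layer_mid_def by (rule suminf_diff[OF s1 s2])
    also have "\<bar>\<dots>\<bar> \<le> suminf g" by (rule suminf_abs_bound(2)[OF gb gs])
    also have "suminf g = (2 + B) * tv_mid (\<lambda>m k. v m k - w m k) + \<delta> * tv_mid w"
      unfolding g_def tv_mid_def
      by (simp add: suminf_add[symmetric] summable_mult td(1) w(2) suminf_mult)
    also have "\<dots> \<le> (2 + B) * \<delta> + \<delta> * tv_mid w" using dv B0 by simp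
    also have "\<dots> = \<delta> * C" unfolding C_def by (simp add: algebra_simps)
    also have "\<dots> \<le> \<epsilon>" using cd(2)[of \<delta>] cd(1) by simp
    finally show "\<bar>layer_mid v y' k - layer_mid w y k\<bar> \<le> \<epsilon>" .
  qed
qed


lemma suminf_norm_bound:
  fixes f :: "nat \<Rightarrow> 'c::banach"
  assumes "\<And>n. norm (f n) \<le> g n" "summable g"
  shows "summable f" "norm (suminf f) \<le> suminf g"
proof -
  have s: "summable (\<lambda>n. norm (f n))"
    by (rule summable_comparison_test'[OF assms(2)]) (use assms(1) in auto)
  then show "summable f" using summable_norm_cancel by blast
  have "norm (suminf f) \<le> (\<Sum>n. norm (f n))" using summable_norm[of f] s by simp
  also have "\<dots> \<le> suminf g" by (rule suminf_le[OF assms(1) s assms(2)])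
  finally show "norm (suminf f) \<le> suminf g" .
qed

lemma layer_out_summable:
  assumes "valid_out w" "\<And>k. \<bar>y k\<bar> \<le> B"
  shows "summable (\<lambda>m. rho y m *\<^sub>R w m)"
proof (rule suminf_norm_bound(1))
  show "summable (\<lambda>m. (1 + B) * norm (w m))" using assms(1) by (intro summable_mult) (simp add: valid_out_def)
  fix m
  have B0: "0 \<le> B" using assms(2)[of 0] by linarith
  show "norm (rho y m *\<^sub>R w m) \<le> (1 + B) * norm (w m)"
    by (simp add: mult_right_mono rho_bound[OF assms(2)])
qed

lemma layer_out_cont:
  assumes "valid_out w" "\<And>k. \<bar>y k\<bar> \<le> B" "\<epsilon> > 0"
  shows "\<exists>\<delta>>0. \<forall>y' v. valid_out v \<longrightarrow> (\<forall>k. \<bar>y' k - y k\<bar> \<le> \<delta>) \<longrightarrow> tv_out (\<lambda>m. v m - w m) \<le> \<delta> \<longrightarrow>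
           dist (layer_out v y') (layer_out w y) < \<epsilon>"
proof -
  have w: "summable (\<lambda>m. norm (w m))" using assms by (auto simp: valid_out_def)
  have B0: "0 \<le> B" using assms(2)[of 0] by linarith
  define C where "C = (2 + B) + tv_out w"
  have C0: "C \<ge> 0" unfolding C_def tv_out_def using B0
    by (intro add_nonneg_nonneg suminf_nonneg w) auto
  define \<delta> where "\<delta> = min 1 ((\<epsilon>/2) / (C+1))"
  have e2: "\<epsilon>/2 > 0" using assms by simp
  note cd = choose_delta[OF C0 e2, folded \<delta>_def]
  have d1: "\<delta> \<le> 1" unfolding \<delta>_def by simp
  show ?thesis
  proof (intro exI[of _ \<delta>] conjI allI impI)
    show "\<delta> > 0" using cd by simp
    fix y' v assume v: "valid_out v" and dy: "\<forall>k. \<bar>y' k - y k\<bar> \<le> \<delta>" and dv: "tv_out (\<lambda>m. v m - w m) \<le> \<delta>"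
    have By': "\<And>k. \<bar>y' k\<bar> \<le> B + 1"
    proof -
      fix k show "\<bar>y' k\<bar> \<le> B + 1" using dy[rule_format, of k] d1 assms(2)[of k] by arith
    qed
    have s1: "summable (\<lambda>m. rho y' m *\<^sub>R v m)" using layer_out_summable[where y=y' and B="B+1", OF v By'] by blast
    have s2: "summable (\<lambda>m. rho y m *\<^sub>R w m)" using layer_out_summable[where y=y and B=B, OF assms(1,2)] by blast
    note td = tv_out_diff[OF v assms(1)]
    define g where "g m = (2 + B) * norm (v m - w m) + \<delta> * norm (w m)" for m
    have gs: "summable g" unfolding g_def by (intro summable_add summable_mult td(1) w)
    have gb: "\<And>m. norm (rho y' m *\<^sub>R v m - rho y m *\<^sub>R w m) \<le> g m"
    proof -
      fix m
      have eq: "rho y' m *\<^sub>R v m - rho y m *\<^sub>R w m = rho y' m *\<^sub>R (v m - w m) + (rho y' m - rho y m) *\<^sub>R w m"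
        by (simp add: algebra_simps)
      have rb: "\<bar>rho y' m\<bar> \<le> 2 + B" using rho_bound[of y' "B+1" m, OF By'] by simp
      have rl: "\<bar>rho y' m - rho y m\<bar> \<le> \<delta>" using rho_lip[of y' y \<delta> m] dy cd(1) by auto
      have "norm (rho y' m *\<^sub>R (v m - w m) + (rho y' m - rho y m) *\<^sub>R w m)
            \<le> \<bar>rho y' m\<bar> * norm (v m - w m) + \<bar>rho y' m - rho y m\<bar> * norm (w m)"
        using norm_triangle_ineq[of "rho y' m *\<^sub>R (v m - w m)" "(rho y' m - rho y m) *\<^sub>R w m"] by simp
      also have "\<dots> \<le> g m" unfolding g_def
        by (intro add_mono mult_right_mono rb rl) auto
      finally show "norm (rho y' m *\<^sub>R v m - rho y m *\<^sub>R w m) \<le> g m" unfolding eq .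
    qed
    have "dist (layer_out v y') (layer_out w y) = norm (\<Sum>m. rho y' m *\<^sub>R v m - rho y m *\<^sub>R w m)"
      unfolding layer_out_def dist_norm by (simp add: suminf_diff[OF s1 s2])
    also have "\<dots> \<le> suminf g" by (rule suminf_norm_bound(2)[OF gb gs])
    also have "suminf g = (2 + B) * tv_out (\<lambda>m. v m - w m) + \<delta> * tv_out w"
      unfolding g_def tv_out_def
      by (simp add: suminf_add[symmetric] summable_mult td(1) w suminf_mult)
    also have "\<dots> \<le> (2 + B) * \<delta> + \<delta> * tv_out w" using dv B0 by simp
    also have "\<dots> = \<delta> * C" unfolding C_def by (simp add: algebra_simps)
    also have "\<dots> \<le> \<epsilon>/2" using cd(2)[of \<delta>] cd(1) by simp
    also have "\<dots> < \<epsilon>" using assms by simp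
    finally show "dist (layer_out v y') (layer_out w y) < \<epsilon>" .
  qed
qed


lemma fold_cont:
  assumes "\<forall>w\<in>set ws. valid_mid w" "valid_out wI" "\<And>k. \<bar>y k\<bar> \<le> B" "\<epsilon> > 0"
  shows "\<exists>\<delta>>0. \<forall>y' vs vI. length vs = length ws \<longrightarrow> (\<forall>v\<in>set vs. valid_mid v) \<longrightarrow> valid_out vI \<longrightarrow>
           (\<forall>k. \<bar>y' k - y k\<bar> \<le> \<delta>) \<longrightarrow>
           (\<forall>i<length ws. tv_mid (\<lambda>m k. (vs!i) m k - (ws!i) m k) \<le> \<delta>) \<longrightarrow>
           tv_out (\<lambda>m. vI m - wI m) \<le> \<delta> \<longrightarrow>
           dist (layer_out vI (fold layer_mid vs y')) (layer_out wI (fold layer_mid ws y)) < \<epsilon>"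
  using assms(1,3)
proof (induction ws arbitrary: y B)
  case Nil
  obtain \<delta> where d: "\<delta> > 0" "\<forall>y' v. valid_out v \<longrightarrow> (\<forall>k. \<bar>y' k - y k\<bar> \<le> \<delta>) \<longrightarrow> tv_out (\<lambda>m. v m - wI m) \<le> \<delta> \<longrightarrow>
           dist (layer_out v y') (layer_out wI y) < \<epsilon>"
    using layer_out_cont[where y=y and B=B, OF assms(2) Nil(2) assms(4)] by blast
  show ?case by (rule exI[of _ \<delta>]) (use d in auto)
next
  case (Cons w ws)
  have w: "valid_mid w" and ws: "\<forall>w\<in>set ws. valid_mid w" using Cons.prems by auto
  define y1 where "y1 = layer_mid w y"
  have b1: "\<And>k. \<bar>y1 k\<bar> \<le> (1 + B) * tv_mid w" unfolding y1_def by (rule layer_mid_bound(2)[OF w Cons.prems(2)])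
  obtain \<delta>1 where d1: "\<delta>1 > 0" "\<forall>y' vs vI. length vs = length ws \<longrightarrow> (\<forall>v\<in>set vs. valid_mid v) \<longrightarrow> valid_out vI \<longrightarrow>
           (\<forall>k. \<bar>y' k - y1 k\<bar> \<le> \<delta>1) \<longrightarrow>
           (\<forall>i<length ws. tv_mid (\<lambda>m k. (vs!i) m k - (ws!i) m k) \<le> \<delta>1) \<longrightarrow>
           tv_out (\<lambda>m. vI m - wI m) \<le> \<delta>1 \<longrightarrow>
           dist (layer_out vI (fold layer_mid vs y')) (layer_out wI (fold layer_mid ws y1)) < \<epsilon>"
    using Cons.IH[where y=y1 and B="(1 + B) * tv_mid w", OF ws b1] by blast
  obtain \<delta>2 where d2: "\<delta>2 > 0" "\<forall>y' v. valid_mid v \<longrightarrow> (\<forall>k. \<bar>y' k - y k\<bar> \<le> \<delta>2) \<longrightarrow> tv_mid (\<lambda>m k. v m k - w m k) \<le> \<delta>2 \<longrightarrow>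
           (\<forall>k. \<bar>layer_mid v y' k - layer_mid w y k\<bar> \<le> \<delta>1)"
    using layer_mid_cont[where y=y and B=B, OF w Cons.prems(2) d1(1)] by blast
  show ?case
  proof (intro exI[of _ "min \<delta>1 \<delta>2"] conjI allI impI)
    show "min \<delta>1 \<delta>2 > 0" using d1 d2 by simp
    fix y' vs vI
    assume len: "length vs = length (w # ws)" and vv: "\<forall>v\<in>set vs. valid_mid v" and vI: "valid_out vI"
      and dy: "\<forall>k. \<bar>y' k - y k\<bar> \<le> min \<delta>1 \<delta>2"
      and dt: "\<forall>i<length (w # ws). tv_mid (\<lambda>m k. (vs!i) m k - ((w # ws)!i) m k) \<le> min \<delta>1 \<delta>2"
      and dO: "tv_out (\<lambda>m. vI m - wI m) \<le> min \<delta>1 \<delta>2"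
    obtain v vs' where vs: "vs = v # vs'" using len by (cases vs) auto
    have v: "valid_mid v" and vs': "\<forall>v\<in>set vs'. valid_mid v" using vv vs by auto
    have t0: "tv_mid (\<lambda>m k. v m k - w m k) \<le> \<delta>2" using dt[rule_format, of 0] vs by simp
    have l1: "\<forall>k. \<bar>layer_mid v y' k - y1 k\<bar> \<le> \<delta>1"
      unfolding y1_def using d2(2) v dy t0 by simp
    have ts: "\<forall>i<length ws. tv_mid (\<lambda>m k. (vs'!i) m k - (ws!i) m k) \<le> \<delta>1"
    proof (intro allI impI)
      fix i assume "i < length ws"
      then show "tv_mid (\<lambda>m k. (vs'!i) m k - (ws!i) m k) \<le> \<delta>1"
        using dt[rule_format, of "Suc i"] vs by simp
    qed
    have "dist (layer_out vI (fold layer_mid vs' (layer_mid v y'))) (layer_out wI (fold layer_mid ws y1)) < \<epsilon>"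
      using d1(2) len vs vs' vI l1 ts dO by simp
    then show "dist (layer_out vI (fold layer_mid vs y')) (layer_out wI (fold layer_mid (w # ws) y)) < \<epsilon>"
      unfolding vs y1_def by simp
  qed
qed

theorem proposition2:
  fixes I :: nat and x :: "real^'a::finite" and p :: "('a, 'b::finite) param"
  assumes "I \<ge> 1" and "p \<in> params I"
  shows "\<forall>\<epsilon>>0. \<exists>\<delta>>0. \<forall>x' q. q \<in> params I \<longrightarrow>
           dist x' x + param_dist q p < \<delta> \<longrightarrow>
           dist (network q x') (network p x) < \<epsilon>"
proof (intro allI impI)
  fix \<epsilon> :: real assume e: "\<epsilon> > 0"
  obtain w0 ws wI where p: "p = (w0, ws, wI)" by (cases p) auto
  have w0: "valid0 w0" and len: "length ws = I - 1" and ws: "\<forall>w\<in>set ws. valid_mid w" and wI: "valid_out wI"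
    using assms(2) unfolding p params_def by auto
  define y where "y = layer0 w0 x"
  have by0: "\<And>k. \<bar>y k\<bar> \<le> (1 + norm x) * tv0 w0" unfolding y_def by (rule layer0_bound[OF w0])
  obtain \<delta>1 where d1: "\<delta>1 > 0" "\<forall>y' vs vI. length vs = length ws \<longrightarrow> (\<forall>v\<in>set vs. valid_mid v) \<longrightarrow> valid_out vI \<longrightarrow>
           (\<forall>k. \<bar>y' k - y k\<bar> \<le> \<delta>1) \<longrightarrow>
           (\<forall>i<length ws. tv_mid (\<lambda>m k. (vs!i) m k - (ws!i) m k) \<le> \<delta>1) \<longrightarrow>
           tv_out (\<lambda>m. vI m - wI m) \<le> \<delta>1 \<longrightarrow>
           dist (layer_out vI (fold layer_mid vs y')) (layer_out wI (fold layer_mid ws y)) < \<epsilon>"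
    using fold_cont[where y=y and B="(1 + norm x) * tv0 w0", OF ws wI by0 e] by blast
  obtain \<delta>2 where d2: "\<delta>2 > 0" "\<forall>x' v. valid0 v \<longrightarrow> dist x' x \<le> \<delta>2 \<longrightarrow> tv0 (\<lambda>m k. v m k - w0 m k) \<le> \<delta>2 \<longrightarrow>
           (\<forall>k. \<bar>layer0 v x' k - layer0 w0 x k\<bar> \<le> \<delta>1)"
    using layer0_cont[OF w0 d1(1)] by blast
  show "\<exists>\<delta>>0. \<forall>x' q. q \<in> params I \<longrightarrow> dist x' x + param_dist q p < \<delta> \<longrightarrow>
           dist (network q x') (network p x) < \<epsilon>"
  proof (intro exI[of _ "min \<delta>1 \<delta>2"] conjI allI impI)
    show "min \<delta>1 \<delta>2 > 0" using d1 d2 by simp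
    fix x' q assume q: "q \<in> params I" and d: "dist x' x + param_dist q p < min \<delta>1 \<delta>2"
    obtain v0 vs vI where qq: "q = (v0, vs, vI)" by (cases q) auto
    have v0: "valid0 v0" and lenv: "length vs = I - 1" and vs: "\<forall>w\<in>set vs. valid_mid w" and vI: "valid_out vI"
      using q unfolding qq params_def by auto
    have lens: "length vs = length ws" using len lenv by simp
    define T0 where "T0 = tv0 (\<lambda>m k. v0 m k - w0 m k)"
    define TM where "TM i = tv_mid (\<lambda>m k. (vs!i) m k - (ws!i) m k)" for i
    define TO where "TO = tv_out (\<lambda>m. vI m - wI m)"
    have pd: "param_dist q p = T0 + (\<Sum>i<length vs. TM i) + TO"
      unfolding param_dist_def qq p T0_def TM_def TO_def by simp
    have T00: "T0 \<ge> 0" unfolding T0_def by (rule tv0_diff(1)[OF v0 w0])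
    have TO0: "TO \<ge> 0" unfolding TO_def by (rule tv_out_diff(2)[OF vI wI])
    have TM0: "\<And>i. i < length vs \<Longrightarrow> TM i \<ge> 0"
      unfolding TM_def using vs ws lens by (intro tv_mid_diff(2)) auto
    have SM0: "(\<Sum>i<length vs. TM i) \<ge> 0" by (rule sum_nonneg) (use TM0 in auto)
    have TMle: "\<And>i. i < length vs \<Longrightarrow> TM i \<le> (\<Sum>i<length vs. TM i)"
      by (rule member_le_sum) (use TM0 in auto)
    have dist0: "dist x' x \<ge> 0" by simp
    have dx: "dist x' x \<le> \<delta>2" and t0: "T0 \<le> \<delta>2" and tO: "TO \<le> \<delta>1"
      using d pd T00 TO0 SM0 dist0 by linarith+
    have tm: "\<forall>i<length ws. TM i \<le> \<delta>1"
      using d pd T00 TO0 SM0 dist0 TMle lens by (smt (verit))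
    have l0: "\<forall>k. \<bar>layer0 v0 x' k - y k\<bar> \<le> \<delta>1"
      unfolding y_def using d2(2) v0 dx t0 unfolding T0_def by simp
    have "dist (layer_out vI (fold layer_mid vs (layer0 v0 x'))) (layer_out wI (fold layer_mid ws y)) < \<epsilon>"
      using d1(2) lens vs vI l0 tm tO unfolding TM_def TO_def by simp
    then show "dist (network q x') (network p x) < \<epsilon>"
      unfolding network_def qq p y_def by simp
  qed
qed

end
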